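(* Let $0<\tau<1$ be fixed and let $(Y_i,X_i,\mathbf{Z}_i)$, $i=1,\dots,n$, be i.i.d. copies of $(Y,X,\mathbf{Z})$ satisfying conditions (A1)–(A5) below. Then, as $n\to\infty$, $$\sup_{\boldsymbol{\theta}\in\Theta}|M_{n,\tau}(\boldsymbol{\theta})-M_\tau(\boldsymbol{\theta})|\to0\quad\text{in probability}.$$
   Context: $a_+=aI(a>0)$. $\boldsymbol{\xi}=(\beta_0,\beta_1,\beta_2,\boldsymbol{\gamma}^\top)^\top$, $\boldsymbol{\theta}=(\boldsymbol{\xi}^\top,t)^\top$, $\mathbf{V}(t)=(1,X,(X-t)_+,\mathbf{Z}^\top)^\top$, $\mathbf{V}_i(t)=(1,X_i,(X_i-t)_+,\mathbf{Z}_i^\top)^\top$, with $\mathbf{Z}$ a $p$-vector. $\rho_\tau(u)=(1-\tau)u^2$ for $u\le0$, $\tau u^2$ for $u>0$. $M_{n,\tau}(\boldsymbol{\theta})=n^{-1}\sum_{i=1}^n\rho_\tau(Y_i-\boldsymbol{\xi}^\top\mathbf{V}_i(t))$ and $M_\tau(\boldsymbol{\theta})=E\rho_\tau(Y-\boldsymbol{\xi}^\top\mathbf{V}(t))$. The data follow the model $\nu_\tau(Y\mid X,\mathbf{Z})=\boldsymbol{\xi}^\top\mathbf{V}(t)$ for the $\tau$-expectile (minimizer of $E\rho_\tau(Y-\nu)$ conditionally), with true parameter $\boldsymbol{\theta}_\tau$; $\widehat{\boldsymbol{\xi}}(t)=\arg\min_{\boldsymbol{\xi}}M_{n,\tau}(\boldsymbol{\xi},t)$;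 $\mathcal{T}$ is the set of candidate thresholds. Conditions: (A1) $t_0=\arg\min_{t\in\mathcal{T}}M_\tau(\widehat{\boldsymbol{\xi}}(t),t)$ is unique, $\mathcal{T}$ compact in $\mathbb{R}$. (A2) $\boldsymbol{\theta}_\tau\in\Theta$, a compact subset of $\mathbb{R}^{p+4}$. (A3) $X$ has an absolutely continuous distribution with density strictly positive, bounded and continuous near $t_0$. (A4) $E|Y|^2,E|X|^2,E|\mathbf{Z}|^2<\infty$. (A5) Given $\beta_2\ne0$, the Hessian of $M_\tau$ at the true parameter is nonsingular. *)

theory Defs
  imports "HOL-Probability.Probability"
begin

definition rho :: "real \<Rightarrow> real \<Rightarrow> real" where
  "rho tau u = (if u \<le> 0 then (1 - tau) * u\<^sup>2 else tau * u\<^sup>2)"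

definition pos_part :: "real \<Rightarrow> real" where
  "pos_part a = (if a > 0 then a else 0)"

definition lin_index :: "real \<times> real \<times> real \<times> (real ^ 'p) \<Rightarrow> real \<Rightarrow> real \<Rightarrow> real ^ 'p \<Rightarrow> real" where
  "lin_index xi t x z = (case xi of (b0, b1, b2, g) \<Rightarrow> b0 + b1 * x + b2 * pos_part (x - t) + g \<bullet> z)"

definition Mn :: "real \<Rightarrow> (nat \<Rightarrow> 'a \<Rightarrow> real) \<Rightarrow> (nat \<Rightarrow> 'a \<Rightarrow> real) \<Rightarrow> (nat \<Rightarrow> 'a \<Rightarrow> real ^ 'p)
   \<Rightarrow> nat \<Rightarrow> (real \<times> real \<times> real \<times> (real ^ 'p)) \<times> real \<Rightarrow> 'a \<Rightarrow> real" where
  "Mn tau Y X Z n theta \<omega> =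
     (\<Sum>i<n. rho tau (Y i \<omega> - lin_index (fst theta) (snd theta) (X i \<omega>) (Z i \<omega>))) / real n"

definition Mpop :: "'a measure \<Rightarrow> real \<Rightarrow> ('a \<Rightarrow> real) \<Rightarrow> ('a \<Rightarrow> real) \<Rightarrow> ('a \<Rightarrow> real ^ 'p)
   \<Rightarrow> (real \<times> real \<times> real \<times> (real ^ 'p)) \<times> real \<Rightarrow> real" where
  "Mpop M tau Y X Z theta =
     (\<integral>\<omega>. rho tau (Y \<omega> - lin_index (fst theta) (snd theta) (X \<omega>) (Z \<omega>)) \<partial>M)"

end

theory Submission
  imports Defs
begin

lemma pos_part_max: "pos_part x = max x 0"
  unfolding pos_part_def by auto
lemma rho_alt: "rho tau u = (1 - tau) * (min u 0)\<^sup>2 + tau * (max u 0)\<^sup>2"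
  unfolding rho_def by (auto simp: min_def max_def)
lemma lin_alt: "lin_index xi t x z = fst xi + fst (snd xi) * x + fst (snd (snd xi)) * max (x - t) 0 + snd (snd (snd xi)) \<bullet> z"
  unfolding lin_index_def pos_part_max by (auto split: prod.splits)
lemma g_cont: "continuous_on UNIV (\<lambda>v::real\<times>real\<times>(real^'p). rho tau (fst v - lin_index xi t (fst (snd v)) (snd (snd v))))"
  unfolding rho_alt lin_alt by (intro continuous_intros)
lemma g_meas[measurable]: "(\<lambda>v::real\<times>real\<times>(real^'p). rho tau (fst v - lin_index xi t (fst (snd v)) (snd (snd v)))) \<in> borel_measurable borel"
  by (rule borel_measurable_continuous_onI[OF g_cont])

lemma rho_le:
  assumes "0 \<le> tau" "tau \<le> 1"
  shows "0 \<le> rho tau u" "rho tau u \<le> u\<^sup>2"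
  using assms unfolding rho_def by (auto simp: mult_left_le_one_le)

lemma rho_lip:
  assumes "0 \<le> tau" "tau \<le> 1"
  shows "\<bar>rho tau u - rho tau v\<bar> \<le> (\<bar>u\<bar> + \<bar>v\<bar>) * \<bar>u - v\<bar>"
proof -
  have sq: "\<bar>u\<^sup>2 - v\<^sup>2\<bar> = \<bar>u + v\<bar> * \<bar>u - v\<bar>"
    by (simp add: power2_eq_square abs_mult[symmetric] algebra_simps)
  have uv: "\<bar>u + v\<bar> \<le> \<bar>u\<bar> + \<bar>v\<bar>" by (rule abs_triangle_ineq)
  have nn: "0 \<le> \<bar>u - v\<bar>" by simp
  show ?thesis
  proof (cases "u \<le> 0")
    case u: True
    show ?thesis
    proof (cases "v \<le> 0")
      case True
      then have "\<bar>rho tau u - rho tau v\<bar> = (1 - tau) * \<bar>u\<^sup>2 - v\<^sup>2\<bar>"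
        using u assms unfolding rho_def by (simp add: right_diff_distrib[symmetric] abs_mult)
      also have "\<dots> \<le> \<bar>u\<^sup>2 - v\<^sup>2\<bar>" using assms by (simp add: mult_left_le_one_le)
      also have "\<dots> \<le> (\<bar>u\<bar> + \<bar>v\<bar>) * \<bar>u - v\<bar>" unfolding sq by (rule mult_right_mono[OF uv nn])
      finally show ?thesis .
    next
      case False
      then have "\<bar>u - v\<bar> = \<bar>u\<bar> + \<bar>v\<bar>" using u by auto
      moreover have "\<bar>rho tau u - rho tau v\<bar> \<le> u\<^sup>2 + v\<^sup>2"
        using rho_le[OF assms, of u] rho_le[OF assms, of v] by linarith
      moreover have "u\<^sup>2 + v\<^sup>2 \<le> (\<bar>u\<bar> + \<bar>v\<bar>) * (\<bar>u\<bar> + \<bar>v\<bar>)"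
        by (simp add: power2_eq_square algebra_simps)
      ultimately show ?thesis by simp
    qed
  next
    case u: False
    show ?thesis
    proof (cases "v \<le> 0")
      case False
      then have "\<bar>rho tau u - rho tau v\<bar> = tau * \<bar>u\<^sup>2 - v\<^sup>2\<bar>"
        using u assms unfolding rho_def by (simp add: right_diff_distrib[symmetric] abs_mult)
      also have "\<dots> \<le> \<bar>u\<^sup>2 - v\<^sup>2\<bar>" using assms by (simp add: mult_left_le_one_le)
      also have "\<dots> \<le> (\<bar>u\<bar> + \<bar>v\<bar>) * \<bar>u - v\<bar>" unfolding sq by (rule mult_right_mono[OF uv nn])
      finally show ?thesis .
    next
      case True
      then have "\<bar>u - v\<bar> = \<bar>u\<bar> + \<bar>v\<bar>" using u by auto
      moreover have "\<bar>rho tau u - rho tau v\<bar> \<le> u\<^sup>2 + v\<^sup>2"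
        using rho_le[OF assms, of u] rho_le[OF assms, of v] by linarith
      moreover have "u\<^sup>2 + v\<^sup>2 \<le> (\<bar>u\<bar> + \<bar>v\<bar>) * (\<bar>u\<bar> + \<bar>v\<bar>)"
        by (simp add: power2_eq_square algebra_simps)
      ultimately show ?thesis by simp
    qed
  qed
qed

lemma pos_part_bounds: "\<bar>pos_part (x - t)\<bar> \<le> \<bar>x\<bar> + \<bar>t\<bar>" "\<bar>pos_part (x - t) - pos_part (x - s)\<bar> \<le> \<bar>t - s\<bar>"
  unfolding pos_part_def by auto

lemma prod_le: "\<bar>a\<bar> \<le> A \<Longrightarrow> \<bar>b\<bar> \<le> Bb \<Longrightarrow> \<bar>a * b\<bar> \<le> A * Bb" for a b A Bb :: real
  by (simp add: abs_mult mult_mono')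

lemma inner_le: "norm g \<le> A \<Longrightarrow> \<bar>g \<bullet> (z::real^'p)\<bar> \<le> A * norm z"
  by (meson Cauchy_Schwarz_ineq2 mult_right_mono norm_ge_zero order_trans)

lemma lin_bound:
  assumes "\<bar>b0\<bar> \<le> B" "\<bar>b1\<bar> \<le> B" "\<bar>b2\<bar> \<le> B" "norm g \<le> B" "\<bar>t\<bar> \<le> B"
  shows "\<bar>lin_index (b0,b1,b2,g) t x (z::real^'p)\<bar> \<le> B * (1 + 2*B + 2*\<bar>x\<bar> + norm z)"
proof -
  have B: "B \<ge> 0" using assms(1) by linarith
  have h1: "\<bar>b1 * x\<bar> \<le> B * \<bar>x\<bar>" using prod_le[OF assms(2), of x "\<bar>x\<bar>"] by simp
  have h2: "\<bar>b2 * pos_part (x - t)\<bar> \<le> B * (\<bar>x\<bar> + B)"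
    using prod_le[OF assms(3) order_trans[OF pos_part_bounds(1)]] assms(5) by auto
  have h3: "\<bar>g \<bullet> z\<bar> \<le> B * norm z" by (rule inner_le[OF assms(4)])
  have "\<bar>lin_index (b0,b1,b2,g) t x z\<bar> \<le> \<bar>b0\<bar> + \<bar>b1 * x\<bar> + \<bar>b2 * pos_part (x - t)\<bar> + \<bar>g \<bullet> z\<bar>"
    unfolding lin_index_def by simp
  also have "\<dots> \<le> B + B * \<bar>x\<bar> + B * (\<bar>x\<bar> + B) + B * norm z" using h1 h2 h3 assms(1) by linarith
  also have "\<dots> \<le> B * (1 + 2*B + 2*\<bar>x\<bar> + norm z)" using B by (simp add: algebra_simps)
  finally show ?thesis .
qed

lemma lin_lip:
  assumes "\<bar>b0 - c0\<bar> \<le> d" "\<bar>b1 - c1\<bar> \<le> d" "\<bar>b2 - c2\<bar> \<le> d" "norm (g - h) \<le> d" "\<bar>t - s\<bar> \<le> d"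
    "\<bar>c2\<bar> \<le> B" "\<bar>t\<bar> \<le> B"
  shows "\<bar>lin_index (b0,b1,b2,g) t x (z::real^'p) - lin_index (c0,c1,c2,h) s x z\<bar> \<le> d * (1 + 2*B + 2*\<bar>x\<bar> + norm z)"
proof -
  have B: "B \<ge> 0" "d \<ge> 0" using assms by linarith+
  have eq: "lin_index (b0,b1,b2,g) t x z - lin_index (c0,c1,c2,h) s x z
     = (b0 - c0) + (b1 - c1) * x + (b2 - c2) * pos_part (x - t) + c2 * (pos_part (x - t) - pos_part (x - s)) + (g - h) \<bullet> z"
    unfolding lin_index_def by (simp add: algebra_simps inner_diff_left)
  have h1: "\<bar>(b1 - c1) * x\<bar> \<le> d * \<bar>x\<bar>" using prod_le[OF assms(2), of x "\<bar>x\<bar>"] by simp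
  have h2: "\<bar>(b2 - c2) * pos_part (x - t)\<bar> \<le> d * (\<bar>x\<bar> + B)"
    using prod_le[OF assms(3) order_trans[OF pos_part_bounds(1)]] assms(7) by auto
  have h3: "\<bar>c2 * (pos_part (x - t) - pos_part (x - s))\<bar> \<le> B * d"
    using prod_le[OF assms(6) order_trans[OF pos_part_bounds(2) assms(5)]] by simp
  have h4: "\<bar>(g - h) \<bullet> z\<bar> \<le> d * norm z" by (rule inner_le[OF assms(4)])
  have "\<bar>lin_index (b0,b1,b2,g) t x z - lin_index (c0,c1,c2,h) s x z\<bar>
      \<le> d + d * \<bar>x\<bar> + d * (\<bar>x\<bar> + B) + B * d + d * norm z"
    unfolding eq using h1 h2 h3 h4 assms(1) by linarith
  also have "\<dots> = d * (1 + 2*B + 2*\<bar>x\<bar> + norm z)" by (simp add: algebra_simps)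
  finally show ?thesis .
qed

lemma poly_bound:
  fixes y sx wz B a LL WW :: real
  assumes "sx \<ge> 0" "wz \<ge> 0" "B \<ge> 0"
  and a_def: "a = 1 + 2*B"
  and L_def: "LL = a + 2* sx + wz"
  and W_def: "WW = \<bar>y\<bar> + B * LL"
  shows "2 * WW * LL \<le> 12 * a^4 * (1 + y\<^sup>2 + sx\<^sup>2 + wz\<^sup>2)" "WW\<^sup>2 \<le> 12 * a^4 * (1 + y\<^sup>2 + sx\<^sup>2 + wz\<^sup>2)"
proof -
  have a1: "a \<ge> 1" unfolding a_def using assms by simp
  have L2: "LL\<^sup>2 \<le> 3 * (a\<^sup>2 + 4* sx\<^sup>2 + wz\<^sup>2)"
  proof -
    have "3 * (a\<^sup>2 + 4* sx\<^sup>2 + wz\<^sup>2) - LL\<^sup>2 = (a - 2* sx)\<^sup>2 + (2* sx - wz)\<^sup>2 + (a - wz)\<^sup>2"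
      unfolding L_def by (simp add: power2_eq_square algebra_simps)
    moreover have "(a - 2* sx)\<^sup>2 + (2* sx - wz)\<^sup>2 + (a - wz)\<^sup>2 \<ge> 0" by simp
    ultimately show ?thesis by linarith
  qed
  have yL: "2 * \<bar>y\<bar> * LL \<le> y\<^sup>2 + LL\<^sup>2"
  proof -
    have "0 \<le> (\<bar>y\<bar> - LL)\<^sup>2" by simp
    then show ?thesis by (simp add: power2_eq_square algebra_simps)
  qed
  have aa: "a \<le> a^2" "a^2 \<le> a^3" "a^3 \<le> a^4" 
    using power_increasing[of 1 2 a] power_increasing[of 2 3 a] power_increasing[of 3 4 a] a1 by auto
  have mono: "k * q \<le> 12 * a^4 * q" if "k \<le> 12 * a^4" "0 \<le> q" for k q :: real
    using mult_right_mono[OF that] .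
  have P: "0 \<le> 1 + y\<^sup>2 + sx\<^sup>2 + wz\<^sup>2" by simp
  have "2 * WW * LL = 2 * \<bar>y\<bar> * LL + 2 * B * LL\<^sup>2" unfolding W_def by (simp add: power2_eq_square algebra_simps)
  also have "\<dots> \<le> y\<^sup>2 + a * LL\<^sup>2" using yL unfolding a_def by (simp add: algebra_simps)
  also have "\<dots> \<le> y\<^sup>2 + a * (3 * (a\<^sup>2 + 4* sx\<^sup>2 + wz\<^sup>2))" using L2 a1 by (intro add_left_mono mult_left_mono) auto
  also have "\<dots> = y\<^sup>2 + 3 * a^3 + 12 * a * sx\<^sup>2 + 3 * a * wz\<^sup>2" by (simp add: power2_eq_square power3_eq_cube algebra_simps)
  also have "\<dots> \<le> 12 * a^4 * (1 + y\<^sup>2 + sx\<^sup>2 + wz\<^sup>2)"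
  proof -
    have 1: "1 * y\<^sup>2 \<le> 12 * a^4 * y\<^sup>2" using aa a1 by (intro mono) auto
    have 2: "3 * a^3 \<le> 12 * a^4" using aa a1 zero_le_power[of a 4] by linarith
    have 3: "(12 * a) * sx\<^sup>2 \<le> 12 * a^4 * sx\<^sup>2" using aa by (intro mono) auto
    have 4: "(3 * a) * wz\<^sup>2 \<le> 12 * a^4 * wz\<^sup>2" using aa a1 by (intro mono) auto
    show ?thesis using 1 2 3 4 by (simp add: algebra_simps)
  qed
  finally show "2 * WW * LL \<le> 12 * a^4 * (1 + y\<^sup>2 + sx\<^sup>2 + wz\<^sup>2)" .
  have "WW\<^sup>2 \<le> 2 * y\<^sup>2 + 2 * (B * LL)\<^sup>2"
  proof -
    have "0 \<le> (\<bar>y\<bar> - B * LL)\<^sup>2" by simp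
    then show ?thesis unfolding W_def by (simp add: power2_eq_square algebra_simps)
  qed
  also have "\<dots> \<le> 2 * y\<^sup>2 + a\<^sup>2 * LL\<^sup>2"
  proof -
    have "2 * B\<^sup>2 \<le> a\<^sup>2" unfolding a_def using assms by (simp add: power2_eq_square algebra_simps)
    then have "2 * B\<^sup>2 * LL\<^sup>2 \<le> a\<^sup>2 * LL\<^sup>2" by (intro mult_right_mono) auto
    then show ?thesis by (simp add: power_mult_distrib)
  qed
  also have "\<dots> \<le> 2 * y\<^sup>2 + a\<^sup>2 * (3 * (a\<^sup>2 + 4* sx\<^sup>2 + wz\<^sup>2))" using L2 by (intro add_left_mono mult_left_mono) auto
  also have "\<dots> = 2 * y\<^sup>2 + 3 * a^4 + 12 * a\<^sup>2 * sx\<^sup>2 + 3 * a\<^sup>2 * wz\<^sup>2"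
    by (simp add: power2_eq_square power4_eq_xxxx algebra_simps)
  also have "\<dots> \<le> 12 * a^4 * (1 + y\<^sup>2 + sx\<^sup>2 + wz\<^sup>2)"
  proof -
    have 1: "2 * y\<^sup>2 \<le> 12 * a^4 * y\<^sup>2" using aa a1 by (intro mono) auto
    have 3: "(12 * a\<^sup>2) * sx\<^sup>2 \<le> 12 * a^4 * sx\<^sup>2" using aa by (intro mono) auto
    have 4: "(3 * a\<^sup>2) * wz\<^sup>2 \<le> 12 * a^4 * wz\<^sup>2" using aa a1 by (intro mono) auto
    have "0 \<le> a^4" using a1 by simp
    moreover have "12 * a^4 * (1 + y\<^sup>2 + sx\<^sup>2 + wz\<^sup>2) = 12 * a^4 + 12 * a^4 * y\<^sup>2 + 12 * a^4 * sx\<^sup>2 + 12 * a^4 * wz\<^sup>2"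
      by (simp add: algebra_simps)
    ultimately show ?thesis using 1 3 4 by linarith
  qed
  finally show "WW\<^sup>2 \<le> 12 * a^4 * (1 + y\<^sup>2 + sx\<^sup>2 + wz\<^sup>2)" .
qed

definition gf :: "real \<Rightarrow> (real \<times> real \<times> real \<times> (real ^ 'p)) \<times> real \<Rightarrow> real \<times> real \<times> (real ^ 'p) \<Rightarrow> real" where
  "gf tau th v = rho tau (fst v - lin_index (fst th) (snd th) (fst (snd v)) (snd (snd v)))"

definition Kf :: "real \<Rightarrow> real \<times> real \<times> (real ^ 'p) \<Rightarrow> real" where
  "Kf B v = 12 * (1 + 2*B)^4 * (1 + (fst v)\<^sup>2 + (fst (snd v))\<^sup>2 + (norm (snd (snd v)))\<^sup>2)"

lemma comp_norm:
  assumes "norm (((b0,b1,b2,g),t) :: (real \<times> real \<times> real \<times> (real ^ 'p)) \<times> real) \<le> B"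
  shows "\<bar>b0\<bar> \<le> B \<and> \<bar>b1\<bar> \<le> B \<and> \<bar>b2\<bar> \<le> B \<and> norm g \<le> B \<and> \<bar>t\<bar> \<le> B"
proof -
  have n1: "norm (b0,b1,b2,g) \<le> B" "norm t \<le> B"
    using norm_fst_le[of "(b0,b1,b2,g)" t] norm_snd_le[of t "(b0,b1,b2,g)"] assms by linarith+
  have n2: "norm b0 \<le> B" "norm (b1,b2,g) \<le> B"
    using norm_fst_le[of b0 "(b1,b2,g)"] norm_snd_le[of "(b1,b2,g)" b0] n1 by linarith+
  have n3: "norm b1 \<le> B" "norm (b2,g) \<le> B"
    using norm_fst_le[of b1 "(b2,g)"] norm_snd_le[of "(b2,g)" b1] n2 by linarith+
  have n4: "norm b2 \<le> B" "norm g \<le> B"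
    using norm_fst_le[of b2 g] norm_snd_le[of g b2] n3 by linarith+
  show ?thesis using n1 n2 n3 n4 by simp
qed

lemma comp_dist:
  assumes "dist (((b0,b1,b2,g),t) :: (real \<times> real \<times> real \<times> (real ^ 'p)) \<times> real) ((c0,c1,c2,h),s) \<le> d"
  shows "\<bar>b0 - c0\<bar> \<le> d \<and> \<bar>b1 - c1\<bar> \<le> d \<and> \<bar>b2 - c2\<bar> \<le> d \<and> norm (g - h) \<le> d \<and> \<bar>t - s\<bar> \<le> d"
proof -
  have n1: "dist (b0,b1,b2,g) (c0,c1,c2,h) \<le> d" "dist t s \<le> d"
    using dist_fst_le[of "((b0,b1,b2,g),t)" "((c0,c1,c2,h),s)"]
      dist_snd_le[of "((b0,b1,b2,g),t)" "((c0,c1,c2,h),s)"] assms by simp_all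
  have n2: "dist b0 c0 \<le> d" "dist (b1,b2,g) (c1,c2,h) \<le> d"
    using dist_fst_le[of "(b0,b1,b2,g)" "(c0,c1,c2,h)"] dist_snd_le[of "(b0,b1,b2,g)" "(c0,c1,c2,h)"] n1 by simp_all
  have n3: "dist b1 c1 \<le> d" "dist (b2,g) (c2,h) \<le> d"
    using dist_fst_le[of "(b1,b2,g)" "(c1,c2,h)"] dist_snd_le[of "(b1,b2,g)" "(c1,c2,h)"] n2 by simp_all
  have n4: "dist b2 c2 \<le> d" "dist g h \<le> d"
    using dist_fst_le[of "(b2,g)" "(c2,h)"] dist_snd_le[of "(b2,g)" "(c2,h)"] n3 by simp_all
  show ?thesis using n1 n2 n3 n4 by (simp add: dist_real_def dist_norm)
qed

lemma g_lip:
  fixes th th' :: "(real \<times> real \<times> real \<times> (real ^ 'p)) \<times> real"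
  assumes tau: "0 \<le> tau" "tau \<le> 1" and B: "B \<ge> 0" "norm th \<le> B" "norm th' \<le> B"
  shows "\<bar>gf tau th v - gf tau th' v\<bar> \<le> dist th th' * Kf B v" "\<bar>gf tau th v\<bar> \<le> Kf B v"
proof -
  obtain b0 b1 b2 g t where th: "th = ((b0,b1,b2,g),t)" by (metis prod.collapse)
  obtain c0 c1 c2 h s where th': "th' = ((c0,c1,c2,h),s)" by (metis prod.collapse)
  obtain y x z where v: "v = (y, x, z)" by (metis prod.collapse)
  define d where "d = dist th th'"
  define L where "L = (1 + 2*B) + 2 * \<bar>x\<bar> + norm z"
  define W where "W = \<bar>y\<bar> + B * L"
  have cb: "\<bar>b0\<bar> \<le> B \<and> \<bar>b1\<bar> \<le> B \<and> \<bar>b2\<bar> \<le> B \<and> norm g \<le> B \<and> \<bar>t\<bar> \<le> B"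
    using comp_norm B(2) unfolding th by blast
  have cc: "\<bar>c0\<bar> \<le> B \<and> \<bar>c1\<bar> \<le> B \<and> \<bar>c2\<bar> \<le> B \<and> norm h \<le> B \<and> \<bar>s\<bar> \<le> B"
    using comp_norm B(3) unfolding th' by blast
  have cd: "\<bar>b0 - c0\<bar> \<le> d \<and> \<bar>b1 - c1\<bar> \<le> d \<and> \<bar>b2 - c2\<bar> \<le> d \<and> norm (g - h) \<le> d \<and> \<bar>t - s\<bar> \<le> d"
    using comp_dist[of b0 b1 b2 g t c0 c1 c2 h s d] unfolding d_def th th' by simp
  have Lb1: "\<bar>lin_index (b0,b1,b2,g) t x z\<bar> \<le> B * L"
    using lin_bound[of b0 B b1 b2 g t x z] cb unfolding L_def by (simp add: algebra_simps)
  have Lb2: "\<bar>lin_index (c0,c1,c2,h) s x z\<bar> \<le> B * L"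
    using lin_bound[of c0 B c1 c2 h s x z] cc unfolding L_def by (simp add: algebra_simps)
  have Ll: "\<bar>lin_index (b0,b1,b2,g) t x z - lin_index (c0,c1,c2,h) s x z\<bar> \<le> d * L"
    using lin_lip[of b0 c0 d b1 c1 b2 c2 g h t s B x z] cb cc cd unfolding L_def by (simp add: algebra_simps)
  define u where "u = y - lin_index (b0,b1,b2,g) t x z"
  define u' where "u' = y - lin_index (c0,c1,c2,h) s x z"
  have uW: "\<bar>u\<bar> \<le> W" "\<bar>u'\<bar> \<le> W" unfolding u_def u'_def W_def using Lb1 Lb2 by linarith+
  have uu: "\<bar>u - u'\<bar> \<le> d * L" unfolding u_def u'_def using Ll by linarith
  have pb: "2 * W * L \<le> Kf B v" "W\<^sup>2 \<le> Kf B v"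
    using poly_bound[where sx="\<bar>x\<bar>" and wz="norm z" and B=B and a="1 + 2*B" and LL=L and WW=W and y=y] B unfolding Kf_def v by (simp_all add: L_def W_def)
  have L0: "L \<ge> 0" "W \<ge> 0" "d \<ge> 0" unfolding L_def W_def d_def using B by auto
  have "\<bar>gf tau th v - gf tau th' v\<bar> = \<bar>rho tau u - rho tau u'\<bar>"
    unfolding gf_def th th' v u_def u'_def by simp
  also have "\<dots> \<le> (\<bar>u\<bar> + \<bar>u'\<bar>) * \<bar>u - u'\<bar>" by (rule rho_lip[OF tau])
  also have "\<dots> \<le> (2 * W) * (d * L)"
    using uW uu by (intro mult_mono) auto
  also have "\<dots> = d * (2 * W * L)" by simp
  also have "\<dots> \<le> d * Kf B v" using pb(1) L0 by (intro mult_left_mono) auto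
  finally show "\<bar>gf tau th v - gf tau th' v\<bar> \<le> dist th th' * Kf B v" unfolding d_def .
  have "\<bar>gf tau th v\<bar> = rho tau u" unfolding gf_def th v u_def using rho_le[OF tau] by simp
  also have "\<dots> \<le> u\<^sup>2" using rho_le[OF tau] by simp
  also have "\<dots> \<le> W\<^sup>2" using uW(1) L0(2) by (metis abs_le_square_iff abs_of_nonneg)
  also have "\<dots> \<le> Kf B v" by (rule pb(2))
  finally show "\<bar>gf tau th v\<bar> \<le> Kf B v" .
qed

definition Tc :: "real \<Rightarrow> real \<Rightarrow> real" where "Tc c x = max (-c) (min c x)"

lemma Tc_meas[measurable]: "Tc c \<in> borel_measurable borel"
  unfolding Tc_def by measurable

lemma exp_lim: "k > 0 \<Longrightarrow> (\<lambda>n::nat. 2 * exp (- (k * real n))) \<longlonglongrightarrow> 0"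
proof -
  assume k: "k > 0"
  have "(\<lambda>n::nat. exp (-k) ^ n) \<longlonglongrightarrow> 0"
    by (rule LIMSEQ_power_zero) (use k in auto)
  moreover have "\<And>n. exp (- (k * real n)) = exp (-k) ^ n"
    by (metis exp_of_nat_mult mult.commute mult_minus_right)
  ultimately show ?thesis by (simp add: tendsto_mult_right_zero)
qed

context prob_space begin

lemma iid_transfer:
  assumes dist: "distr M borel (U i) = distr M borel (U 0)"
    and mi: "U i \<in> borel_measurable M" and m0: "U 0 \<in> borel_measurable M"
    and f: "f \<in> borel_measurable borel"
  shows "integrable M (\<lambda>\<omega>. f (U i \<omega>)) = integrable M (\<lambda>\<omega>. (f (U 0 \<omega>)::real))
       \<and> (\<integral>\<omega>. f (U i \<omega>) \<partial>M) = (\<integral>\<omega>. f (U 0 \<omega>) \<partial>M)"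
  using integrable_distr_eq[OF mi f] integrable_distr_eq[OF m0 f]
        integral_distr[OF mi f] integral_distr[OF m0 f] dist by metis

lemma wlln:
  fixes U :: "nat \<Rightarrow> 'a \<Rightarrow> real"
  assumes ind: "indep_vars (\<lambda>_. borel) U UNIV"
    and dist: "\<And>i. distr M borel (U i) = distr M borel (U 0)"
    and int: "integrable M (U 0)"
    and e: "e > 0"
  shows "(\<lambda>n. prob {\<omega>\<in>space M. \<bar>(\<Sum>i<n. U i \<omega>) / real n - expectation (U 0)\<bar> > e}) \<longlonglongrightarrow> 0"
proof -
  have meas[measurable]: "\<And>i. U i \<in> borel_measurable M"
    using ind unfolding indep_vars_def by auto
  have tr: "integrable M (\<lambda>\<omega>. f (U i \<omega>)) = integrable M (\<lambda>\<omega>. (f (U 0 \<omega>)::real))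
       \<and> (\<integral>\<omega>. f (U i \<omega>) \<partial>M) = (\<integral>\<omega>. f (U 0 \<omega>) \<partial>M)"
    if "f \<in> borel_measurable borel" for f i
    by (rule iid_transfer[OF dist[of i] meas[of i] meas[of 0] that])
  define R where "R c x = x - Tc c x" for c x
  have R_meas[measurable]: "R c \<in> borel_measurable borel" for c
    unfolding R_def by measurable
  have Tb: "\<bar>Tc c x\<bar> \<le> c" if "c \<ge> 0" for c x using that unfolding Tc_def by auto
  have intT: "integrable M (\<lambda>\<omega>. Tc c (U i \<omega>))" if "c \<ge> 0" for c i
    by (rule Bochner_Integration.integrable_bound[where f="\<lambda>_. c"]) (use Tb that in auto)
  have intU: "integrable M (U i)" for i
    using tr[of "\<lambda>x. x" i] int by simp
  have intR: "integrable M (\<lambda>\<omega>. R c (U i \<omega>))" if "c \<ge> 0" for c i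
    unfolding R_def using intU[of i] intT[OF that, of i] by auto
  have Rlim: "(\<lambda>m. \<integral>\<omega>. \<bar>R (real m + 1) (U 0 \<omega>)\<bar> \<partial>M) \<longlonglongrightarrow> 0"
  proof -
    have "(\<lambda>m. \<integral>\<omega>. \<bar>R (real m + 1) (U 0 \<omega>)\<bar> \<partial>M) \<longlonglongrightarrow> (\<integral>\<omega>. 0 \<partial>M)"
    proof (rule integral_dominated_convergence[where w="\<lambda>\<omega>. \<bar>U 0 \<omega>\<bar>"])
      show "integrable M (\<lambda>\<omega>. \<bar>U 0 \<omega>\<bar>)" using int by auto
      show "AE x in M. (\<lambda>i. \<bar>R (real i + 1) (U 0 x)\<bar>) \<longlonglongrightarrow> 0"
      proof (intro AE_I2 tendsto_eventually)
        fix x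
        obtain N :: nat where "\<bar>U 0 x\<bar> \<le> real N" using real_arch_simple by blast
        then show "\<forall>\<^sub>F i in sequentially. \<bar>R (real i + 1) (U 0 x)\<bar> = 0"
          unfolding eventually_sequentially R_def Tc_def
          by (intro exI[of _ N]) auto
      qed
      show "AE x in M. norm \<bar>R (real i + 1) (U 0 x)\<bar> \<le> \<bar>U 0 x\<bar>" for i
        unfolding R_def Tc_def by (intro AE_I2) auto
    qed auto
    then show ?thesis by simp
  qed
  show ?thesis
  proof (rule LIMSEQ_I)
    fix \<eta> :: real assume \<eta>: "\<eta> > 0"
    have "min (e/3) (e*\<eta>/6) > 0" using e \<eta> by auto
    from order_tendstoD(2)[OF Rlim this] obtain m where
      m: "(\<integral>\<omega>. \<bar>R (real m + 1) (U 0 \<omega>)\<bar> \<partial>M) < min (e/3) (e*\<eta>/6)"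
      by (auto simp: eventually_sequentially)
    define c where "c = real m + 1"
    have c: "c > 0" unfolding c_def by auto
    define \<mu> where "\<mu> = expectation (\<lambda>\<omega>. Tc c (U 0 \<omega>))"
    define k where "k = 2 * (e/3)\<^sup>2 / (c - (-c))\<^sup>2"
    have k: "k > 0" unfolding k_def using e c by auto
    from order_tendstoD(2)[OF exp_lim[OF k], of "\<eta>/2"] \<eta> obtain N1 where
      N1: "\<And>n. n \<ge> N1 \<Longrightarrow> 2 * exp (- (k * real n)) < \<eta>/2"
      by (auto simp: eventually_sequentially)
    have main: "prob {\<omega>\<in>space M. \<bar>(\<Sum>i<n. U i \<omega>) / real n - expectation (U 0)\<bar> > e} < \<eta>"
      if n: "n \<ge> Suc N1" for n
    proof -
      have n0: "n > 0" using n by auto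
      define A where "A = {\<omega>\<in>space M. \<bar>(\<Sum>i\<in>{..<n}. Tc c (U i \<omega>)) / real (card {..<n}) - \<mu>\<bar> \<ge> e/3}"
      define B where "B = {\<omega>\<in>space M. (\<Sum>i<n. \<bar>R c (U i \<omega>)\<bar>) / real n \<ge> e/3}"
      have A_le: "prob A \<le> 2 * exp (- (k * real n))"
      proof -
        interpret I: iid_interval_bounded_random_variables M "{..<n}" "\<lambda>i \<omega>. Tc c (U i \<omega>)" "\<lambda>\<omega>. Tc c (U 0 \<omega>)" "-c" c
        proof
          show "indep_vars (\<lambda>_. borel) (\<lambda>i \<omega>. Tc c (U i \<omega>)) {..<n}"
            by (rule indep_vars_compose2[OF indep_vars_subset[OF ind subset_UNIV]]) simp
          show "distr M borel (\<lambda>\<omega>. Tc c (U i \<omega>)) = distr M borel (\<lambda>\<omega>. Tc c (U 0 \<omega>))" for i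
          proof -
            have e1: "distr (distr M borel (U j)) borel (Tc c) = distr M borel (\<lambda>\<omega>. Tc c (U j \<omega>))" for j
              using distr_distr[of "Tc c" borel borel "U j" M] by (simp add: comp_def)
            show ?thesis using e1[of i] e1[of 0] dist[of i] by simp
          qed
          show "AE x in M. Tc c (U 0 x) \<in> {-c..c}"
            using c unfolding Tc_def by (intro AE_I2) auto
        qed auto
        interpret H: Hoeffding_ineq_iid M "{..<n}" "\<lambda>i \<omega>. Tc c (U i \<omega>)" "\<lambda>\<omega>. Tc c (U 0 \<omega>)" "-c" c \<mu>
          by unfold_locales (simp add: \<mu>_def)
        have "prob A \<le> 2 * exp (-2 * real (card {..<n}) * (e/3)\<^sup>2 / (c - -c)\<^sup>2)"
          unfolding A_def
          by (rule H.Hoeffding_ineq_abs_ge') (use e c n0 in auto)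
        also have "\<dots> = 2 * exp (- (k * real n))"
          unfolding k_def by (simp add: field_simps)
        finally show ?thesis .
      qed
      have B_le: "prob B \<le> (\<integral>\<omega>. \<bar>R c (U 0 \<omega>)\<bar> \<partial>M) / (e/3)"
      proof -
        have "prob B \<le> (\<integral>\<omega>. (\<Sum>i<n. \<bar>R c (U i \<omega>)\<bar>) / real n \<partial>M) / (e/3)"
          unfolding B_def
          by (rule integral_Markov_inequality_measure[where A="space M"])
             (use e c intR in \<open>auto intro!: sum_nonneg\<close>)
        also have "(\<integral>\<omega>. (\<Sum>i<n. \<bar>R c (U i \<omega>)\<bar>) / real n \<partial>M) = (\<integral>\<omega>. \<bar>R c (U 0 \<omega>)\<bar> \<partial>M)"
        proof -
          have "(\<integral>\<omega>. (\<Sum>i<n. \<bar>R c (U i \<omega>)\<bar>) / real n \<partial>M) = (\<Sum>i<n. \<integral>\<omega>. \<bar>R c (U i \<omega>)\<bar> \<partial>M) / real n"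
            using intR c by (simp add: integral_sum)
          also have "\<dots> = (\<Sum>i<n. \<integral>\<omega>. \<bar>R c (U 0 \<omega>)\<bar> \<partial>M) / real n"
          proof -
            have eq: "\<And>i. expectation (\<lambda>\<omega>. \<bar>R c (U i \<omega>)\<bar>) = expectation (\<lambda>\<omega>. \<bar>R c (U 0 \<omega>)\<bar>)"
              using tr[of "\<lambda>x. \<bar>R c x\<bar>"] by simp
            show ?thesis by (intro arg_cong[where f="\<lambda>x. x / real n"] sum.cong refl eq)
          qed
          finally show ?thesis using n0 by simp
        qed
        finally show ?thesis .
      qed
      have ER: "(\<integral>\<omega>. \<bar>R c (U 0 \<omega>)\<bar> \<partial>M) < min (e/3) (e*\<eta>/6)" using m unfolding c_def .
      have sub: "{\<omega>\<in>space M. \<bar>(\<Sum>i<n. U i \<omega>) / real n - expectation (U 0)\<bar> > e} \<subseteq> A \<union> B"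
      proof
        fix \<omega> assume w: "\<omega> \<in> {\<omega>\<in>space M. \<bar>(\<Sum>i<n. U i \<omega>) / real n - expectation (U 0)\<bar> > e}"
        show "\<omega> \<in> A \<union> B"
        proof (rule ccontr)
          assume "\<omega> \<notin> A \<union> B"
          then have a: "\<bar>(\<Sum>i<n. Tc c (U i \<omega>)) / real n - \<mu>\<bar> < e/3"
            and b: "(\<Sum>i<n. \<bar>R c (U i \<omega>)\<bar>) / real n < e/3"
            using w unfolding A_def B_def by auto
          have s1: "(\<Sum>i<n. U i \<omega>) = (\<Sum>i<n. Tc c (U i \<omega>)) + (\<Sum>i<n. R c (U i \<omega>))"
            unfolding R_def by (simp add: sum.distrib[symmetric])
          have s2: "expectation (U 0) = \<mu> + expectation (\<lambda>\<omega>. R c (U 0 \<omega>))"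
            unfolding \<mu>_def R_def using intU[of 0] intT[of c 0] c
            by (subst Bochner_Integration.integral_add[symmetric]) auto
          have s3: "\<bar>(\<Sum>i<n. R c (U i \<omega>))\<bar> \<le> (\<Sum>i<n. \<bar>R c (U i \<omega>)\<bar>)"
            by (rule sum_abs)
          have s4: "\<bar>expectation (\<lambda>\<omega>. R c (U 0 \<omega>))\<bar> \<le> (\<integral>\<omega>. \<bar>R c (U 0 \<omega>)\<bar> \<partial>M)"
            by (rule integral_abs_bound)
          have "\<bar>(\<Sum>i<n. U i \<omega>) / real n - expectation (U 0)\<bar>
              \<le> \<bar>(\<Sum>i<n. Tc c (U i \<omega>)) / real n - \<mu>\<bar> + (\<Sum>i<n. \<bar>R c (U i \<omega>)\<bar>) / real n
                + (\<integral>\<omega>. \<bar>R c (U 0 \<omega>)\<bar> \<partial>M)"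
          proof -
            have "\<bar>(\<Sum>i<n. R c (U i \<omega>)) / real n\<bar> \<le> (\<Sum>i<n. \<bar>R c (U i \<omega>)\<bar>) / real n"
              using s3 n0 by (simp add: divide_right_mono)
            moreover have key: "\<And>a b m r B1 B2::real. \<bar>b\<bar> \<le> B1 \<Longrightarrow> \<bar>r\<bar> \<le> B2 \<Longrightarrow> \<bar>a + b - (m + r)\<bar> \<le> \<bar>a - m\<bar> + B1 + B2"
              by arith
            ultimately show ?thesis unfolding s1 s2 add_divide_distrib using s4 by blast
          qed
          moreover have "(\<integral>\<omega>. \<bar>R c (U 0 \<omega>)\<bar> \<partial>M) < e/3" using ER by simp
          moreover have "e < \<bar>(\<Sum>i<n. U i \<omega>) / real n - expectation (U 0)\<bar>" using w by simp
          ultimately show False using a b by linarith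
        qed
      qed
      have "prob {\<omega>\<in>space M. \<bar>(\<Sum>i<n. U i \<omega>) / real n - expectation (U 0)\<bar> > e} \<le> prob (A \<union> B)"
        by (rule finite_measure_mono[OF sub]) (auto simp: A_def B_def)
      also have "\<dots> \<le> prob A + prob B"
        by (rule measure_subadditive) (auto simp: A_def B_def)
      also have "\<dots> < \<eta>/2 + \<eta>/2"
      proof -
        have "prob B < \<eta>/2"
        proof -
          have "(\<integral>\<omega>. \<bar>R c (U 0 \<omega>)\<bar> \<partial>M) / (e/3) < (e*\<eta>/6) / (e/3)"
            using ER e by (intro divide_strict_right_mono) auto
          also have "\<dots> = \<eta>/2" using e by (simp add: field_simps)
          finally show ?thesis using B_le by linarith
        qed
        moreover have "prob A < \<eta>/2" using A_le N1[of n] n by linarith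
        ultimately show ?thesis by linarith
      qed
      finally show ?thesis by simp
    qed
    show "\<exists>no. \<forall>n\<ge>no. norm (prob {\<omega>\<in>space M. \<bar>(\<Sum>i<n. U i \<omega>) / real n - expectation (U 0)\<bar> > e} - 0) < \<eta>"
      using main by (intro exI[of _ "Suc N1"]) auto
  qed
qed

end

lemma gf_meas[measurable]: "gf tau th \<in> borel_measurable borel"
  using g_meas[of tau "fst th" "snd th"] unfolding gf_def[abs_def] by simp

lemma Kf_meas[measurable]: "(Kf B :: real \<times> real \<times> (real^'p) \<Rightarrow> real) \<in> borel_measurable borel"
proof -
  have "continuous_on UNIV (Kf B :: real \<times> real \<times> (real^'p) \<Rightarrow> real)"
    unfolding Kf_def[abs_def] by (intro continuous_intros)
  then show ?thesis by (rule borel_measurable_continuous_onI)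
qed

lemma Kf_nonneg: "B \<ge> 0 \<Longrightarrow> Kf B v \<ge> 0"
  unfolding Kf_def by simp

lemma (in prob_space) distr_comp_eq:
  assumes "distr M borel (V i) = distr M borel (V 0)" "V i \<in> borel_measurable M" "V 0 \<in> borel_measurable M"
    "(f :: _ \<Rightarrow> real) \<in> borel_measurable borel"
  shows "distr M borel (\<lambda>\<omega>. f (V i \<omega>)) = distr M borel (\<lambda>\<omega>. f (V 0 \<omega>))"
proof -
  have e1: "distr (distr M borel (V j)) borel f = distr M borel (\<lambda>\<omega>. f (V j \<omega>))"
    if "V j \<in> borel_measurable M" for j
    using distr_distr[of f borel borel "V j" M] that assms(4) by (simp add: comp_def)
  show ?thesis using e1[OF assms(2)] e1[OF assms(3)] assms(1) by simp
qed

theorem lemmaA1: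
  fixes M :: "'a measure"
    and tau :: real
    and Y X :: "nat \<Rightarrow> 'a \<Rightarrow> real"
    and Z :: "nat \<Rightarrow> 'a \<Rightarrow> real ^ 'p"
    and Theta :: "((real \<times> real \<times> real \<times> (real ^ 'p)) \<times> real) set"
    and theta_tau :: "(real \<times> real \<times> real \<times> (real ^ 'p)) \<times> real"
    and T :: "real set"
    and t0 :: real
    and fX :: "real \<Rightarrow> real"
    and G :: "(real \<times> real \<times> real \<times> (real ^ 'p)) \<times> real \<Rightarrow> (real \<times> real \<times> real \<times> (real ^ 'p)) \<times> real"
    and H :: "(real \<times> real \<times> real \<times> (real ^ 'p)) \<times> real \<Rightarrow> (real \<times> real \<times> real \<times> (real ^ 'p)) \<times> real"
  assumes P: "prob_space M"
    and tau: "0 < tau" "tau < 1"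
    (* random variables and i.i.d. sampling *)
    and meas: "\<And>i. Y i \<in> borel_measurable M" "\<And>i. X i \<in> borel_measurable M"
              "\<And>i. Z i \<in> borel_measurable M"
    and indep: "prob_space.indep_vars M (\<lambda>_. borel) (\<lambda>i \<omega>. (Y i \<omega>, X i \<omega>, Z i \<omega>)) UNIV"
    and ident: "\<And>i. distr M borel (\<lambda>\<omega>. (Y i \<omega>, X i \<omega>, Z i \<omega>))
                    = distr M borel (\<lambda>\<omega>. (Y 0 \<omega>, X 0 \<omega>, Z 0 \<omega>))"
    (* model: the conditional tau-expectile of Y given (X,Z) is xi_tau^T V(t_tau) *)
    and model: "\<And>\<nu>::real. AE \<omega> in M.
         real_cond_exp M (vimage_algebra (space M) (\<lambda>\<omega>. (X 0 \<omega>, Z 0 \<omega>)) borel)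
           (\<lambda>\<omega>. rho tau (Y 0 \<omega> - lin_index (fst theta_tau) (snd theta_tau) (X 0 \<omega>) (Z 0 \<omega>))) \<omega>
         \<le> real_cond_exp M (vimage_algebra (space M) (\<lambda>\<omega>. (X 0 \<omega>, Z 0 \<omega>)) borel)
           (\<lambda>\<omega>. rho tau (Y 0 \<omega> - \<nu>)) \<omega>"
    (* (A1) *)
    and A1: "compact T" "t0 \<in> T"
       "\<And>t. t \<in> T \<Longrightarrow> t \<noteq> t0 \<Longrightarrow>
          (INF xi. Mpop M tau (Y 0) (X 0) (Z 0) (xi, t0)) < (INF xi. Mpop M tau (Y 0) (X 0) (Z 0) (xi, t))"
    (* (A2) *)
    and A2: "compact Theta" "theta_tau \<in> Theta"
    (* (A3) *)
    and A3: "distributed M lborel (X 0) (\<lambda>x. ennreal (fX x))" "\<And>x. fX x \<ge> 0"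
       "\<exists>\<delta>>0. (\<forall>x\<in>ball t0 \<delta>. fX x > 0) \<and> bounded (fX ` ball t0 \<delta>) \<and> continuous_on (ball t0 \<delta>) fX"
    (* (A4) *)
    and A4: "integrable M (\<lambda>\<omega>. (Y 0 \<omega>)\<^sup>2)" "integrable M (\<lambda>\<omega>. (X 0 \<omega>)\<^sup>2)"
       "integrable M (\<lambda>\<omega>. (norm (Z 0 \<omega>))\<^sup>2)"
    (* (A5): Hessian of M_tau at theta_tau exists and is nonsingular, given beta2 <> 0 *)
    and A5: "fst (snd (snd (fst theta_tau))) \<noteq> 0 \<Longrightarrow>
       (\<exists>U. open U \<and> theta_tau \<in> U \<and>
          (\<forall>th\<in>U. (Mpop M tau (Y 0) (X 0) (Z 0) has_derivative (\<lambda>h. G th \<bullet> h)) (at th))) \<and>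
       (G has_derivative H) (at theta_tau) \<and> inj H"
  shows "\<forall>\<epsilon>>0. (\<lambda>n. measure M {\<omega>\<in>space M.
            (SUP th\<in>Theta. \<bar>Mn tau Y X Z n th \<omega> - Mpop M tau (Y 0) (X 0) (Z 0) th\<bar>) > \<epsilon>})
          \<longlonglongrightarrow> 0"
proof -
  interpret prob_space M by (rule P)
  define xi where "xi i \<omega> = (Y i \<omega>, X i \<omega>, Z i \<omega>)" for i \<omega>
  have xi_eq: "(\<lambda>i \<omega>. (Y i \<omega>, X i \<omega>, Z i \<omega>)) = xi" by (simp add: fun_eq_iff xi_def)
  have ind: "indep_vars (\<lambda>_. borel) xi UNIV" using indep unfolding xi_eq .
  have xim[measurable]: "xi i \<in> borel_measurable M" for i
    using ind unfolding indep_vars_def by auto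
  have xid: "distr M borel (xi i) = distr M borel (xi 0)" for i
    using ident[of i] unfolding xi_def[abs_def] by simp
  have tau01: "0 \<le> tau" "tau \<le> 1" using tau by auto
  obtain B where B: "B > 0" "\<And>th. th \<in> Theta \<Longrightarrow> norm th \<le> B"
    using compact_imp_bounded[OF A2(1)] unfolding bounded_pos by auto
  define K where "K v = Kf B v" for v :: "real \<times> real \<times> (real^'p)"
  have Km[measurable]: "K \<in> borel_measurable borel" unfolding K_def[abs_def] using Kf_meas by simp
  have K0: "K v \<ge> 0" for v unfolding K_def using Kf_nonneg[of B v] B(1) by linarith
  have intK: "integrable M (\<lambda>\<omega>. K (xi 0 \<omega>))"
  proof -
    have "integrable M (\<lambda>\<omega>. 12 * (1 + 2*B)^4 * (1 + (Y 0 \<omega>)\<^sup>2 + (X 0 \<omega>)\<^sup>2 + (norm (Z 0 \<omega>))\<^sup>2))"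
      using A4 by (intro integrable_mult_right Bochner_Integration.integrable_add) auto
    then show ?thesis unfolding K_def Kf_def xi_def by simp
  qed
  define EK where "EK = (\<integral>\<omega>. K (xi 0 \<omega>) \<partial>M)"
  have EK0: "EK \<ge> 0" unfolding EK_def using K0 by (simp add: integral_nonneg)
  have gfK: "\<bar>gf tau th v - gf tau th' v\<bar> \<le> dist th th' * K v" "\<bar>gf tau th v\<bar> \<le> K v"
    if "th \<in> Theta" "th' \<in> Theta" for th th' v
    using g_lip[OF tau01, of B th th' v] B that unfolding K_def by auto
  have intg: "integrable M (\<lambda>\<omega>. gf tau th (xi 0 \<omega>))" if "th \<in> Theta" for th
    by (rule Bochner_Integration.integrable_bound[OF intK]) (use gfK(2)[OF that that] K0 in auto)
  have Mn_eq: "Mn tau Y X Z n th \<omega> = (\<Sum>i<n. gf tau th (xi i \<omega>)) / real n" for n th \<omega>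
    unfolding Mn_def gf_def xi_def by simp
  have Mp_eq: "Mpop M tau (Y 0) (X 0) (Z 0) th = (\<integral>\<omega>. gf tau th (xi 0 \<omega>) \<partial>M)" for th
    unfolding Mpop_def gf_def xi_def by simp
  have wl: "(\<lambda>n. prob {\<omega>\<in>space M. \<bar>(\<Sum>i<n. f (xi i \<omega>)) / real n - (\<integral>\<omega>. f (xi 0 \<omega>) \<partial>M)\<bar> > e}) \<longlonglongrightarrow> 0"
    if fm: "f \<in> borel_measurable borel" and fi: "integrable M (\<lambda>\<omega>. f (xi 0 \<omega>))" and e: "e > 0" for f e
  proof -
    have "indep_vars (\<lambda>_. borel) (\<lambda>i \<omega>. f (xi i \<omega>)) UNIV"
      by (rule indep_vars_compose2[OF ind]) (use fm in simp)
    moreover have "distr M borel (\<lambda>\<omega>. f (xi i \<omega>)) = distr M borel (\<lambda>\<omega>. f (xi 0 \<omega>))" for i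
      by (rule distr_comp_eq[OF xid[of i] xim[of i] xim[of 0] fm])
    ultimately show ?thesis using wlln[of "\<lambda>i \<omega>. f (xi i \<omega>)" e] fi e by simp
  qed
  show ?thesis
  proof (intro allI impI)
    fix \<epsilon> :: real assume \<epsilon>: "\<epsilon> > 0"
    define \<delta> where "\<delta> = \<epsilon> / (3 * (2 * EK + 1))"
    have \<delta>: "\<delta> > 0" "\<delta> * (2 * EK + 1) \<le> \<epsilon> / 3" unfolding \<delta>_def using \<epsilon> EK0 by (auto simp: field_simps)
    obtain C where C: "finite C" "C \<subseteq> Theta" "Theta \<subseteq> (\<Union>c\<in>C. ball c \<delta>)"
      using seq_compact_imp_totally_bounded[OF compact_imp_seq_compact[OF A2(1)]] \<delta>(1) by meson
    define Ev where "Ev n c = {\<omega>\<in>space M. \<bar>(\<Sum>i<n. gf tau c (xi i \<omega>)) / real n - (\<integral>\<omega>. gf tau c (xi 0 \<omega>) \<partial>M)\<bar> > \<epsilon>/3}" for n c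
    define F where "F n = {\<omega>\<in>space M. \<bar>(\<Sum>i<n. K (xi i \<omega>)) / real n - EK\<bar> > 1}" for n
    define S where "S n = {\<omega>\<in>space M. (SUP th\<in>Theta. \<bar>Mn tau Y X Z n th \<omega> - Mpop M tau (Y 0) (X 0) (Z 0) th\<bar>) > \<epsilon>}" for n
    have Evm: "Ev n c \<in> sets M" for n c unfolding Ev_def by measurable
    have Fm: "F n \<in> sets M" for n unfolding F_def by measurable
    have sub: "S n \<subseteq> (\<Union>c\<in>C. Ev n c) \<union> F n" for n
    proof
      fix \<omega> assume w: "\<omega> \<in> S n"
      then have wsp: "\<omega> \<in> space M" unfolding S_def by auto
      show "\<omega> \<in> (\<Union>c\<in>C. Ev n c) \<union> F n"
      proof (rule ccontr)
        assume "\<omega> \<notin> (\<Union>c\<in>C. Ev n c) \<union> F n"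
        then have nE: "\<And>c. c \<in> C \<Longrightarrow> \<bar>(\<Sum>i<n. gf tau c (xi i \<omega>)) / real n - (\<integral>\<omega>. gf tau c (xi 0 \<omega>) \<partial>M)\<bar> \<le> \<epsilon>/3"
          and nF: "\<bar>(\<Sum>i<n. K (xi i \<omega>)) / real n - EK\<bar> \<le> 1"
          using wsp unfolding Ev_def F_def by auto
        have avgK: "(\<Sum>i<n. K (xi i \<omega>)) / real n \<le> EK + 1" using nF by linarith
        have avgK0: "(\<Sum>i<n. K (xi i \<omega>)) / real n \<ge> 0" using K0 by (simp add: sum_nonneg)
        have bnd: "\<bar>Mn tau Y X Z n th \<omega> - Mpop M tau (Y 0) (X 0) (Z 0) th\<bar> \<le> \<epsilon>" if th: "th \<in> Theta" for th
        proof -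
          obtain c where c: "c \<in> C" "dist c th < \<delta>" using C(3) th by auto
          have cT: "c \<in> Theta" using C(2) c(1) by auto
          define d where "d = dist th c"
          have d: "d \<ge> 0" "d \<le> \<delta>" unfolding d_def using c(2) by (auto simp: dist_commute)
          have t1: "\<bar>Mn tau Y X Z n th \<omega> - Mn tau Y X Z n c \<omega>\<bar> \<le> \<delta> * (EK + 1)"
          proof -
            have "\<bar>Mn tau Y X Z n th \<omega> - Mn tau Y X Z n c \<omega>\<bar> = \<bar>(\<Sum>i<n. gf tau th (xi i \<omega>) - gf tau c (xi i \<omega>))\<bar> / real n"
              unfolding Mn_eq by (simp add: sum_subtractf diff_divide_distrib[symmetric])
            also have "\<dots> \<le> (\<Sum>i<n. d * K (xi i \<omega>)) / real n"
            proof (rule divide_right_mono)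
              show "\<bar>(\<Sum>i<n. gf tau th (xi i \<omega>) - gf tau c (xi i \<omega>))\<bar> \<le> (\<Sum>i<n. d * K (xi i \<omega>))"
              proof -
                have "(\<Sum>i<n. \<bar>gf tau th (xi i \<omega>) - gf tau c (xi i \<omega>)\<bar>) \<le> (\<Sum>i<n. d * K (xi i \<omega>))"
                  by (rule sum_mono) (use gfK(1)[OF th cT] in \<open>simp add: d_def\<close>)
                then show ?thesis
                  using sum_abs[of "\<lambda>i. gf tau th (xi i \<omega>) - gf tau c (xi i \<omega>)" "{..<n}"] by linarith
              qed
            qed simp
            also have "\<dots> = d * ((\<Sum>i<n. K (xi i \<omega>)) / real n)" by (simp add: sum_distrib_left)
            also have "\<dots> \<le> \<delta> * (EK + 1)" using d avgK avgK0 by (intro mult_mono) auto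
            finally show ?thesis .
          qed
          have t3: "\<bar>Mpop M tau (Y 0) (X 0) (Z 0) c - Mpop M tau (Y 0) (X 0) (Z 0) th\<bar> \<le> \<delta> * EK"
          proof -
            have "\<bar>Mpop M tau (Y 0) (X 0) (Z 0) c - Mpop M tau (Y 0) (X 0) (Z 0) th\<bar>
                = \<bar>\<integral>\<omega>. gf tau c (xi 0 \<omega>) - gf tau th (xi 0 \<omega>) \<partial>M\<bar>"
              unfolding Mp_eq using intg[OF cT] intg[OF th] by simp
            also have "\<dots> \<le> (\<integral>\<omega>. \<bar>gf tau c (xi 0 \<omega>) - gf tau th (xi 0 \<omega>)\<bar> \<partial>M)"
              by (rule integral_abs_bound)
            also have "\<dots> \<le> (\<integral>\<omega>. d * K (xi 0 \<omega>) \<partial>M)"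
              using intg[OF cT] intg[OF th] intK gfK(1)[OF th cT] unfolding d_def
              by (intro integral_mono) (auto simp: abs_minus_commute)
            also have "\<dots> = d * EK" unfolding EK_def by simp
            also have "\<dots> \<le> \<delta> * EK" using d EK0 by (intro mult_right_mono) auto
            finally show ?thesis .
          qed
          have t2: "\<bar>Mn tau Y X Z n c \<omega> - Mpop M tau (Y 0) (X 0) (Z 0) c\<bar> \<le> \<epsilon>/3"
            using nE[OF c(1)] unfolding Mn_eq Mp_eq .
          have "\<bar>Mn tau Y X Z n th \<omega> - Mpop M tau (Y 0) (X 0) (Z 0) th\<bar> \<le> \<delta> * (EK + 1) + \<epsilon>/3 + \<delta> * EK"
            using t1 t2 t3 by linarith
          also have "\<dots> = \<delta> * (2 * EK + 1) + \<epsilon>/3" by (simp add: algebra_simps)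
          also have "\<dots> \<le> \<epsilon>" using \<delta>(2) \<epsilon> by linarith
          finally show ?thesis .
        qed
        have "(SUP th\<in>Theta. \<bar>Mn tau Y X Z n th \<omega> - Mpop M tau (Y 0) (X 0) (Z 0) th\<bar>) \<le> \<epsilon>"
          using A2(2) bnd by (intro cSUP_least) auto
        then show False using w unfolding S_def by auto
      qed
    qed
    define bd where "bd n = (\<Sum>c\<in>C. prob (Ev n c)) + prob (F n)" for n
    have le: "measure M (S n) \<le> bd n" for n
    proof (cases "S n \<in> sets M")
      case True
      have Um: "(\<Union>c\<in>C. Ev n c) \<in> sets M" using C(1) Evm by auto
      have "measure M (S n) \<le> measure M ((\<Union>c\<in>C. Ev n c) \<union> F n)"
        by (rule finite_measure_mono[OF sub]) (use Um Fm in auto)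
      also have "\<dots> \<le> measure M (\<Union>c\<in>C. Ev n c) + prob (F n)"
        by (rule measure_subadditive) (use Um Fm in auto)
      also have "measure M (\<Union>c\<in>C. Ev n c) \<le> (\<Sum>c\<in>C. prob (Ev n c))"
        by (rule measure_UNION_le[OF C(1)]) (use Evm in auto)
      finally show ?thesis unfolding bd_def by linarith
    next
      case False
      then have "measure M (S n) = 0" by (simp add: measure_notin_sets)
      then show ?thesis unfolding bd_def by (simp add: sum_nonneg)
    qed
    have "bd \<longlonglongrightarrow> (\<Sum>c\<in>C. 0) + 0"
      unfolding bd_def
    proof (intro tendsto_add tendsto_sum)
      show "(\<lambda>n. prob (Ev n c)) \<longlonglongrightarrow> 0" if "c \<in> C" for c
        unfolding Ev_def using wl[OF gf_meas intg[of c], of "\<epsilon>/3"] that C(2) \<epsilon> by auto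
      show "(\<lambda>n. prob (F n)) \<longlonglongrightarrow> 0"
        unfolding F_def EK_def using wl[OF Km intK, of 1] by simp
    qed
    then have "bd \<longlonglongrightarrow> 0" by simp
    then have "(\<lambda>n. measure M (S n)) \<longlonglongrightarrow> 0"
      using tendsto_sandwich[of "\<lambda>_. 0" "\<lambda>n. measure M (S n)" sequentially bd 0] le by auto
    then show "(\<lambda>n. measure M {\<omega>\<in>space M.
            (SUP th\<in>Theta. \<bar>Mn tau Y X Z n th \<omega> - Mpop M tau (Y 0) (X 0) (Z 0) th\<bar>) > \<epsilon>}) \<longlonglongrightarrow> 0"
      unfolding S_def .
  qed
qed

end
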